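(* Let $n\ge2$. For a polar $n$-complex number $u=x_0+h_1x_1+\cdots+h_{n-1}x_{n-1}$ let $\nu(u)=\det A$, where $A$ is the $n\times n$ matrix with entries $A_{ij}=x_{(i-j)\bmod n}$, $i,j=0,\dots,n-1$. Then $$\nu(u)=\prod_{k=0}^{n-1}\big(x_0+\epsilon_kx_1+\epsilon_k^2x_2+\cdots+\epsilon_k^{n-1}x_{n-1}\big),\quad \epsilon_k=e^{2\pi i k/n},$$ so that $\nu(u)=v_+v_-\prod_{k=1}^{n/2-1}(v_k^2+\tilde v_k^2)$ for even $n$ and $\nu(u)=v_+\prod_{k=1}^{(n-1)/2}(v_k^2+\tilde v_k^2)$ for odd $n$. Moreover, for any two polar $n$-complex numbers $u',u''$ with product $u=u'u''$: $v_+=v_+'v_+''$; $v_-=v_-'v_-''$ (for even $n$); $v_k=v_k'v_k''-\tilde v_k'\tilde v_k''$ and $\tilde v_k=v_k'\tilde v_k''+\tilde v_k'v_k''$ for $k=1,\dots,\lfloor (n-1)/2\rfloor$; hence $\rho_k=\rho_k'\rho_k''$, $\nu(u)=\nu(u')\nu(u'')$, and if $\nu(u'),\nu(u'')>0$ then the amplitudes satisfy $\rho=\rho'\rho''$. If furthermore $\rho_k',\rho_k''>0$ then $\phi_k\equiv\phi_k'+\phi_k''\pmod{2\pi}$; if $v_+',v_+''\neq0$ then $\tan\theta_+=\frac{1}{\sqrt2}\tan\theta_+'\tan\theta_+''$; for even $n$, if $v_-',v_-''\ne0$ then $\tan\theta_-=\frac{1}{\sqrt2}\tan\theta_-'\tan\theta_-''$;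 and if $\rho_{k}',\rho_{k}''>0$ then $\tan\psi_{k-1}=\tan\psi_{k-1}'\tan\psi_{k-1}''$ for $k=2,\dots,\lfloor(n-1)/2\rfloor$. (Primed/double-primed quantities refer to $u'$, $u''$, unprimed ones to $u$.)
   Context: Polar $n$-complex numbers: $u=x_0+h_1x_1+\cdots+h_{n-1}x_{n-1}$, $x_j\in\mathbb{R}$, $h_0=1$, with componentwise addition and bilinear multiplication $h_jh_k=h_{(j+k)\bmod n}$. Canonical variables: $v_+=\sum_{p=0}^{n-1}x_p$; for even $n$, $v_-=\sum_{p=0}^{n-1}(-1)^px_p$; for $k=1,\dots,\lfloor(n-1)/2\rfloor$, $v_k=\sum_p x_p\cos(2\pi kp/n)$, $\tilde v_k=\sum_p x_p\sin(2\pi kp/n)$, $\rho_k=\sqrt{v_k^2+\tilde v_k^2}$; when $\rho_k>0$ the azimuthal angle $\phi_k\in[0,2\pi)$ is defined by $\cos\phi_k=v_k/\rho_k$, $\sin\phi_k=\tilde v_k/\rho_k$. Polar angles: $\tan\theta_+=\sqrt2\rho_1/v_+$, and for even $n$, $\tan\theta_-=\sqrt2\rho_1/v_-$. Planar angles: $\tan\psi_{k-1}=\rho_1/\rho_k$ for $k=2,\dots,\lfloor(n-1)/2\rfloor$. Amplitude: if $\nu(u)>0$, $\rho=\nu(u)^{1/n}$. *)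

theory Defs
  imports Complex_Main "Jordan_Normal_Form.Determinant"
begin

text \<open>A polar n-complex number u = x_0 + h_1 x_1 + ... + h_(n-1) x_(n-1) is represented
  by its coefficient function x :: nat => real; only the values at indices p < n matter.\<close>

definition pmul :: "nat \<Rightarrow> (nat \<Rightarrow> real) \<Rightarrow> (nat \<Rightarrow> real) \<Rightarrow> (nat \<Rightarrow> real)" where
  "pmul n x y = (\<lambda>m. \<Sum>j<n. \<Sum>k<n. if (j + k) mod n = m then x j * y k else 0)"

definition nu :: "nat \<Rightarrow> (nat \<Rightarrow> real) \<Rightarrow> real" where
  "nu n x = det (mat n n (\<lambda>(i, j). x ((i + n - j) mod n)))"

definition vplus :: "nat \<Rightarrow> (nat \<Rightarrow> real) \<Rightarrow> real" where
  "vplus n x = (\<Sum>p<n. x p)"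

definition vminus :: "nat \<Rightarrow> (nat \<Rightarrow> real) \<Rightarrow> real" where
  "vminus n x = (\<Sum>p<n. (-1) ^ p * x p)"

definition vk :: "nat \<Rightarrow> nat \<Rightarrow> (nat \<Rightarrow> real) \<Rightarrow> real" where
  "vk n k x = (\<Sum>p<n. x p * cos (2 * pi * real k * real p / real n))"

definition vtk :: "nat \<Rightarrow> nat \<Rightarrow> (nat \<Rightarrow> real) \<Rightarrow> real" where
  "vtk n k x = (\<Sum>p<n. x p * sin (2 * pi * real k * real p / real n))"

definition rhok :: "nat \<Rightarrow> nat \<Rightarrow> (nat \<Rightarrow> real) \<Rightarrow> real" where
  "rhok n k x = sqrt ((vk n k x)\<^sup>2 + (vtk n k x)\<^sup>2)"

text \<open>Azimuthal angle phi_k in [0, 2 pi), meaningful when rho_k > 0.\<close>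
definition phik :: "nat \<Rightarrow> nat \<Rightarrow> (nat \<Rightarrow> real) \<Rightarrow> real" where
  "phik n k x = (THE \<phi>. 0 \<le> \<phi> \<and> \<phi> < 2 * pi \<and>
      cos \<phi> = vk n k x / rhok n k x \<and> sin \<phi> = vtk n k x / rhok n k x)"

definition tan_theta_plus :: "nat \<Rightarrow> (nat \<Rightarrow> real) \<Rightarrow> real" where
  "tan_theta_plus n x = sqrt 2 * rhok n 1 x / vplus n x"

definition tan_theta_minus :: "nat \<Rightarrow> (nat \<Rightarrow> real) \<Rightarrow> real" where
  "tan_theta_minus n x = sqrt 2 * rhok n 1 x / vminus n x"

definition tan_psi :: "nat \<Rightarrow> nat \<Rightarrow> (nat \<Rightarrow> real) \<Rightarrow> real" where
  "tan_psi n k x = rhok n 1 x / rhok n k x"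

definition amplitude :: "nat \<Rightarrow> (nat \<Rightarrow> real) \<Rightarrow> real" where
  "amplitude n x = root n (nu n x)"

end

theory Submission
  imports Defs
begin


definition ee :: "nat \<Rightarrow> int \<Rightarrow> complex" where
  "ee n a = cis (2 * pi * of_int a / real n)"

lemma ee_add: "ee n (a + b) = ee n a * ee n b"
  by (simp add: ee_def cis_mult add_divide_distrib distrib_left)

lemma ee_mult_n: "n > 0 \<Longrightarrow> ee n (int n * q) = 1"
proof -
  assume "n > 0"
  then have "2 * pi * of_int (int n * q) / real n = 2 * pi * of_int q" by simp
  then show ?thesis unfolding ee_def by simp
qed

lemma ee_mod: "n > 0 \<Longrightarrow> ee n (a mod int n) = ee n a"
proof -
  assume n: "n > 0"
  have "a = a mod int n + int n * (a div int n)" by simp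
  then have "ee n a = ee n (a mod int n) * ee n (int n * (a div int n))"
    by (metis ee_add)
  with ee_mult_n[OF n] show ?thesis by simp
qed

lemma ee_cong: "n > 0 \<Longrightarrow> a mod int n = b mod int n \<Longrightarrow> ee n a = ee n b"
  by (metis ee_mod)

lemma ee_cong_mult: "n > 0 \<Longrightarrow> a mod int n = b mod int n \<Longrightarrow> ee n (c * a) = ee n (c * b)"
  by (rule ee_cong) (auto, metis mod_mult_right_eq)

lemma ee_pow: "ee n d ^ k = ee n (d * int k)"
  by (simp add: ee_def DeMoivre mult_ac)

lemma cis_pow_ee: "cis (2 * pi * real k / real n) ^ p = ee n (int k * int p)"
  by (simp add: ee_def DeMoivre mult_ac)

lemma ee_one_dvd: assumes n: "n > 0" and e: "ee n d = 1" shows "int n dvd d"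
proof -
  let ?x = "2 * pi * of_int d / real n"
  from e have "cos ?x = 1" "sin ?x = 0" unfolding ee_def
    by (metis cis.sel(1) one_complex.sel(1), metis cis.sel(2) one_complex.sel(2))
  then have "sin ?x = sin 0 \<and> cos ?x = cos 0" by simp
  then obtain m :: int where "?x = 0 + 2 * pi * m" using sin_cos_eq_iff by blast
  then have "(2 * pi) * (of_int d / real n) = (2 * pi) * of_int m" by simp
  then have "of_int d / real n = of_int m" using pi_gt_zero by (metis mult_cancel_left mult_eq_0_iff pi_neq_zero zero_neq_numeral)
  then have "of_int d = real n * of_int m" using n by (simp add: field_simps)
  then have "d = int n * m" by (metis of_int_eq_iff of_int_mult of_int_of_nat_eq)
  then show ?thesis by simp
qed

lemma ee_geom: assumes n: "n > 0"
  shows "(\<Sum>k<n. ee n d ^ k) = (if int n dvd d then of_nat n else 0)"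
proof (cases "int n dvd d")
  case True
  then obtain q where "d = int n * q" by blast
  then have "ee n d = 1" using ee_mult_n[OF n] by simp
  then show ?thesis using True by simp
next
  case False
  then have ne: "ee n d \<noteq> 1" using ee_one_dvd[OF n] by blast
  have "ee n d ^ n = 1" unfolding ee_pow using ee_mult_n[OF n, of d] by (simp add: mult.commute)
  then show ?thesis using False ne by (simp add: geometric_sum)
qed

lemma mod_sub_nat: "(i::nat) < n \<Longrightarrow> j < n \<Longrightarrow> (i + n - j) mod n = (if j \<le> i then i - j else i + n - j)"
proof (cases "j \<le> i")
  case True
  assume "i < n" "j < n"
  then have "i + n - j = (i - j) + n" using True by arith
  then have "(i + n - j) mod n = ((i - j) + n) mod n" by (simp only:)
  also have "\<dots> = i - j" using \<open>i < n\<close> by (simp only: mod_add_self2) (simp add: less_imp_diff_less)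
  finally show ?thesis using True by simp
next
  case False
  assume "i < n" "j < n"
  then show ?thesis using False by simp
qed

lemma mod_sub_inv: assumes i: "(i::nat) < n" and a: "a < n"
  shows "(i + n - (i + n - a) mod n) mod n = a"
proof (cases "a \<le> i")
  case True
  then have "(i + n - a) mod n = i - a" using mod_sub_nat[OF i a] by simp
  moreover have "i + n - (i - a) = a + n" using True i by arith
  ultimately show ?thesis using a by simp
next
  case False
  then have "(i + n - a) mod n = i + n - a" using mod_sub_nat[OF i a] by simp
  moreover have "i + n - (i + n - a) = a" using False i a by arith
  ultimately show ?thesis using a by simp
qed

definition lam :: "nat \<Rightarrow> (nat \<Rightarrow> real) \<Rightarrow> nat \<Rightarrow> complex" where
  "lam n u k = (\<Sum>p<n. cis (2 * pi * real k / real n) ^ p * complex_of_real (u p))"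

lemma lam_ee: "lam n u k = (\<Sum>p<n. ee n (int k * int p) * complex_of_real (u p))"
  unfolding lam_def cis_pow_ee ..


lemma det_circ:
  assumes n: "n > 0"
  shows "complex_of_real (nu n u) = (\<Prod>k<n. lam n u k)"
proof -
  define A :: "complex mat" where "A = mat n n (\<lambda>(i, j). complex_of_real (u ((i + n - j) mod n)))"
  define F where "F = mat n n (\<lambda>(j, k). ee n (- (int j * int k)))"
  define G where "G = mat n n (\<lambda>(j, k). ee n (int j * int k))"
  define D where "D = mat n n (\<lambda>(i, j). if i = j then lam n u i else 0)"
  have cA: "A \<in> carrier_mat n n" and cF: "F \<in> carrier_mat n n" and cG: "G \<in> carrier_mat n n"
    and cD: "D \<in> carrier_mat n n" by (auto simp: A_def F_def G_def D_def)
  have hA: "of_real_hom.mat_hom (mat n n (\<lambda>(i, j). u ((i + n - j) mod n))) = A"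
    unfolding A_def by (rule eq_matI) auto
  have nuA: "complex_of_real (nu n u) = det A"
    unfolding nu_def hA[symmetric] by simp
  have AF: "A * F = F * D"
  proof (rule eq_matI)
    fix i k assume i: "i < dim_row (F * D)" and k: "k < dim_col (F * D)"
    then have i: "i < n" and k: "k < n" by (auto simp: F_def D_def)
    have rhs: "(F * D) $$ (i, k) = ee n (- (int i * int k)) * lam n u k"
    proof -
      have "(F * D) $$ (i, k) = (\<Sum>j\<in>{0..<n}. F $$ (i, j) * D $$ (j, k))"
        using i k cF cD by (simp add: scalar_prod_def)
      also have "\<dots> = (\<Sum>j\<in>{0..<n}. if j = k then ee n (- (int i * int k)) * lam n u k else 0)"
        by (rule sum.cong) (use i k in \<open>auto simp: F_def D_def\<close>)
      also have "\<dots> = ee n (- (int i * int k)) * lam n u k" using k by simp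
      finally show ?thesis .
    qed
    have "(A * F) $$ (i, k) = (\<Sum>j\<in>{0..<n}. A $$ (i, j) * F $$ (j, k))"
      using i k cA cF by (simp add: scalar_prod_def)
    also have "\<dots> = (\<Sum>j\<in>{0..<n}. complex_of_real (u ((i + n - j) mod n)) * ee n (- (int j * int k)))"
      by (rule sum.cong) (use i k in \<open>auto simp: A_def F_def\<close>)
    also have "\<dots> = (\<Sum>m\<in>{0..<n}. complex_of_real (u m) * ee n (- (int ((i + n - m) mod n) * int k)))"
    proof (rule sum.reindex_bij_witness[where i = "\<lambda>m. (i + n - m) mod n" and j = "\<lambda>j. (i + n - j) mod n"])
      fix a assume "a \<in> {0..<n}"
      then show "(i + n - (i + n - a) mod n) mod n = a" using i by (simp add: mod_sub_inv)
    next
      fix a assume "a \<in> {0..<n}"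
      then show "(i + n - a) mod n \<in> {0..<n}" using n by auto
    next
      fix a assume "a \<in> {0..<n}"
      then show "(i + n - (i + n - a) mod n) mod n = a" using i by (simp add: mod_sub_inv)
    next
      fix a assume "a \<in> {0..<n}"
      then show "(i + n - a) mod n \<in> {0..<n}" using n by auto
    next
      fix a assume a: "a \<in> {0..<n}"
      then show "complex_of_real (u ((i + n - a) mod n)) * ee n (- (int ((i + n - ((i + n - a) mod n)) mod n) * int k)) =
         complex_of_real (u ((i + n - a) mod n)) * ee n (- (int a * int k))"
        using i a by (simp add: mod_sub_inv)
    qed
    also have "\<dots> = (\<Sum>m\<in>{0..<n}. ee n (- (int i * int k)) * (ee n (int k * int m) * complex_of_real (u m)))"
    proof (rule sum.cong)
      fix m assume m: "m \<in> {0..<n}"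
      have "int ((i + n - m) mod n) mod int n = (int i - int m) mod int n"
        
      proof -
        have "int (i + n - m) = (int i - int m) + int n" using m by auto
        then have "int ((i + n - m) mod n) = ((int i - int m) + int n) mod int n" by (simp add: zmod_int)
        then show ?thesis by simp
      qed
      then have "ee n (- int k * int ((i + n - m) mod n)) = ee n (- int k * (int i - int m))"
        by (rule ee_cong_mult[OF n])
      also have "\<dots> = ee n (- (int i * int k)) * ee n (int k * int m)"
        by (simp add: ee_add[symmetric] algebra_simps)
      finally show "complex_of_real (u m) * ee n (- (int ((i + n - m) mod n) * int k)) =
          ee n (- (int i * int k)) * (ee n (int k * int m) * complex_of_real (u m))" by (simp add: mult_ac)
    qed simp
    also have "\<dots> = ee n (- (int i * int k)) * lam n u k"
      by (simp add: lam_ee sum_distrib_left atLeast0LessThan)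
    finally show "(A * F) $$ (i, k) = (F * D) $$ (i, k)" using rhs by simp
  qed (auto simp: A_def F_def D_def)
  have FG: "F * G = of_nat n \<cdot>\<^sub>m 1\<^sub>m n"
  proof (rule eq_matI)
    fix i l assume i: "i < dim_row (of_nat n \<cdot>\<^sub>m 1\<^sub>m n :: complex mat)" and l: "l < dim_col (of_nat n \<cdot>\<^sub>m 1\<^sub>m n :: complex mat)"
    then have i: "i < n" and l: "l < n" by auto
    have "(F * G) $$ (i, l) = (\<Sum>k\<in>{0..<n}. F $$ (i, k) * G $$ (k, l))"
      using i l cF cG by (simp add: scalar_prod_def)
    also have "\<dots> = (\<Sum>k<n. ee n (int l - int i) ^ k)"
      unfolding atLeast0LessThan
    proof (rule sum.cong)
      fix k assume k: "k \<in> {..<n}"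
      have "F $$ (i, k) * G $$ (k, l) = ee n (- (int i * int k)) * ee n (int k * int l)"
        using i l k by (simp add: F_def G_def)
      also have "\<dots> = ee n ((int l - int i) * int k)" by (simp add: ee_add[symmetric] algebra_simps)
      finally show "F $$ (i, k) * G $$ (k, l) = ee n (int l - int i) ^ k" by (simp add: ee_pow)
    qed simp
    also have "\<dots> = (if i = l then of_nat n else 0)"
    proof -
      have "int n dvd (int l - int i) \<longleftrightarrow> i = l"
      proof
        assume "int n dvd (int l - int i)"
        then obtain q where q: "int l - int i = int n * q" by blast
        show "i = l"
        proof (rule ccontr)
          assume "i \<noteq> l"
          then have "q \<noteq> 0" using q by auto
          then have "\<bar>q\<bar> \<ge> 1" by linarith
          then have "int n * 1 \<le> int n * \<bar>q\<bar>" by (rule mult_left_mono) simp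
          then have "\<bar>int n * q\<bar> \<ge> int n" by (simp add: abs_mult)
          with q i l show False by linarith
        qed
      qed simp
      then show ?thesis using ee_geom[OF n, of "int l - int i"] by simp
    qed
    finally show "(F * G) $$ (i, l) = (of_nat n \<cdot>\<^sub>m 1\<^sub>m n) $$ (i, l)" using i l by simp
  qed (auto simp: F_def G_def)
  have "det F * det G = of_nat n ^ n"
    using det_mult[OF cF cG] FG by simp
  then have dF: "det F \<noteq> 0" using n by auto
  have "det A * det F = det F * det D"
    by (metis AF det_mult[OF cA cF] det_mult[OF cF cD])
  then have "det A = det D" using dF by (metis mult.commute mult_left_cancel)
  also have "det D = prod_list (diag_mat D)"
    by (rule det_upper_triangular[OF _ cD]) (auto simp: D_def upper_triangular_def)
  also have "\<dots> = (\<Prod>k<n. lam n u k)"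
    by (simp add: diag_mat_def D_def prod.distinct_set_conv_list[symmetric] atLeast0LessThan)
  finally show ?thesis using nuA by simp
qed


lemma lam_Complex: "lam n u k = Complex (vk n k u) (vtk n k u)"
proof (rule complex_eqI)
  show "Re (lam n u k) = Re (Complex (vk n k u) (vtk n k u))"
    unfolding lam_def vk_def by (simp add: Re_sum DeMoivre mult_ac)
  show "Im (lam n u k) = Im (Complex (vk n k u) (vtk n k u))"
    unfolding lam_def vtk_def by (simp add: Im_sum DeMoivre mult_ac)
qed

lemma rhok_cmod: "rhok n k u = cmod (lam n u k)"
  by (simp add: rhok_def lam_Complex cmod_def)

lemma lam_mult: assumes n: "n > 0"
  shows "lam n (pmul n u1 u2) k = lam n u1 k * lam n u2 k"
proof -
  have "lam n (pmul n u1 u2) k = (\<Sum>m<n. \<Sum>j<n. \<Sum>l<n.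
      if (j + l) mod n = m then ee n (int k * int m) * (complex_of_real (u1 j) * complex_of_real (u2 l)) else 0)"
    unfolding lam_ee pmul_def of_real_sum sum_distrib_left by (intro sum.cong refl) simp
  also have "\<dots> = (\<Sum>j<n. \<Sum>l<n. \<Sum>m<n.
      if (j + l) mod n = m then ee n (int k * int m) * (complex_of_real (u1 j) * complex_of_real (u2 l)) else 0)"
    by (subst sum.swap, rule sum.cong[OF refl], rule sum.swap)
  also have "\<dots> = (\<Sum>j<n. \<Sum>l<n. ee n (int k * int ((j + l) mod n)) * (complex_of_real (u1 j) * complex_of_real (u2 l)))"
    using n by (simp add: sum.delta)
  also have "\<dots> = (\<Sum>j<n. \<Sum>l<n. (ee n (int k * int j) * complex_of_real (u1 j)) * (ee n (int k * int l) * complex_of_real (u2 l)))"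
  proof (intro sum.cong refl)
    fix j l
    have "ee n (int k * int ((j + l) mod n)) = ee n (int k * (int j + int l))"
      by (rule ee_cong_mult[OF n]) (simp add: zmod_int)
    also have "\<dots> = ee n (int k * int j) * ee n (int k * int l)" by (simp add: distrib_left ee_add)
    finally show "ee n (int k * int ((j + l) mod n)) * (complex_of_real (u1 j) * complex_of_real (u2 l)) =
      (ee n (int k * int j) * complex_of_real (u1 j)) * (ee n (int k * int l) * complex_of_real (u2 l))"
      by (simp add: mult_ac)
  qed
  also have "\<dots> = lam n u1 k * lam n u2 k"
    unfolding lam_ee by (simp add: sum_product)
  finally show ?thesis .
qed

lemma lam_zero: "lam n u 0 = complex_of_real (vplus n u)"
  by (simp add: lam_def vplus_def)

lemma lam_half: assumes "even n" "n > 0" shows "lam n u (n div 2) = complex_of_real (vminus n u)"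
proof -
  obtain m where m: "n = 2 * m" using assms(1) by blast
  then have "m > 0" using assms(2) by simp
  then have "2 * pi * real (n div 2) / real n = pi" using m by (simp add: field_simps)
  then show ?thesis by (simp add: lam_def vminus_def)
qed

lemma lam_cnj: assumes n: "n > 0" and k: "k \<le> n"
  shows "cnj (lam n u k) = lam n u (n - k)"
proof -
  have "cnj (lam n u k) = (\<Sum>p<n. ee n (- (int k * int p)) * complex_of_real (u p))"
    unfolding lam_ee by (simp add: ee_def cis_cnj)
  also have "\<dots> = lam n u (n - k)"
    unfolding lam_ee
  proof (intro sum.cong refl)
    fix p
    have "ee n (int (n - k) * int p) = ee n (int n * int p + (- (int k * int p)))"
      using k by (simp add: of_nat_diff algebra_simps)
    also have "\<dots> = ee n (int n * int p) * ee n (- (int k * int p))" by (rule ee_add)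
    also have "\<dots> = ee n (- (int k * int p))" using ee_mult_n[OF n] by simp
    finally show "ee n (- (int k * int p)) * complex_of_real (u p) = ee n (int (n - k) * int p) * complex_of_real (u p)"
      by simp
  qed
  finally show ?thesis .
qed

lemma lam_pair: assumes n: "n > 0" and k: "k \<le> n"
  shows "lam n u k * lam n u (n - k) = complex_of_real ((vk n k u)\<^sup>2 + (vtk n k u)\<^sup>2)"
proof -
  have "lam n u k * lam n u (n - k) = lam n u k * cnj (lam n u k)" using lam_cnj[OF n k] by simp
  also have "\<dots> = complex_of_real ((cmod (lam n u k))\<^sup>2)" by (metis complex_norm_square of_real_power)
  also have "(cmod (lam n u k))\<^sup>2 = (vk n k u)\<^sup>2 + (vtk n k u)\<^sup>2"
    by (simp add: lam_Complex cmod_def)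
  finally show ?thesis .
qed

lemma prod_pairs: assumes n: "n > 0" and h: "2 * h < n"
  shows "(\<Prod>k\<in>{1..h}. lam n u k) * (\<Prod>k\<in>{n-h..n-1}. lam n u k) =
     complex_of_real (\<Prod>k\<in>{1..h}. (vk n k u)\<^sup>2 + (vtk n k u)\<^sup>2)"
proof -
  have img: "{n-h..n-1} = (\<lambda>k. n - k) ` {1..h}"
  proof
    show "{n-h..n-1} \<subseteq> (\<lambda>k. n - k) ` {1..h}"
    proof
      fix x assume x: "x \<in> {n-h..n-1}"
      then have "n - x \<in> {1..h}" "x = n - (n - x)" using h by auto
      then show "x \<in> (\<lambda>k. n - k) ` {1..h}" by blast
    qed
  qed (use h in auto)
  have inj: "inj_on (\<lambda>k. n - k) {1..h}" using h by (auto simp: inj_on_def)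
  have "(\<Prod>k\<in>{n-h..n-1}. lam n u k) = (\<Prod>k\<in>{1..h}. lam n u (n - k))"
    by (simp only: img prod.reindex[OF inj] comp_def)
  then have "(\<Prod>k\<in>{1..h}. lam n u k) * (\<Prod>k\<in>{n-h..n-1}. lam n u k) =
      (\<Prod>k\<in>{1..h}. lam n u k * lam n u (n - k))" by (simp add: prod.distrib)
  also have "\<dots> = (\<Prod>k\<in>{1..h}. complex_of_real ((vk n k u)\<^sup>2 + (vtk n k u)\<^sup>2))"
    using h by (intro prod.cong refl lam_pair[OF n]) auto
  finally show ?thesis by simp
qed

lemma nu_odd: assumes n: "odd n" "n \<ge> 2"
  shows "nu n u = vplus n u * (\<Prod>k\<in>{1..(n - 1) div 2}. (vk n k u)\<^sup>2 + (vtk n k u)\<^sup>2)"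
proof -
  define h where "h = (n - 1) div 2"
  have n0: "n > 0" using n by simp
  have nh: "n = 2 * h + 1" using n unfolding h_def by presburger
  have split: "{..<n} = insert 0 ({1..h} \<union> {n-h..n-1})" using nh by auto
  have "complex_of_real (nu n u) = (\<Prod>k<n. lam n u k)" by (rule det_circ[OF n0])
  also have "\<dots> = lam n u 0 * ((\<Prod>k\<in>{1..h}. lam n u k) * (\<Prod>k\<in>{n-h..n-1}. lam n u k))"
    unfolding split using nh by (subst prod.insert) (auto simp: prod.union_disjoint)
  also have "\<dots> = complex_of_real (vplus n u * (\<Prod>k\<in>{1..h}. (vk n k u)\<^sup>2 + (vtk n k u)\<^sup>2))"
    using prod_pairs[OF n0, of h u] nh by (simp add: lam_zero)
  finally show ?thesis unfolding h_def of_real_eq_iff .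
qed

lemma nu_even: assumes n: "even n" "n \<ge> 2"
  shows "nu n u = vplus n u * vminus n u * (\<Prod>k\<in>{1..n div 2 - 1}. (vk n k u)\<^sup>2 + (vtk n k u)\<^sup>2)"
proof -
  define h where "h = n div 2 - 1"
  have n0: "n > 0" using n by simp
  have nh: "n = 2 * h + 2" using n unfolding h_def by presburger
  have hh: "h + 1 = n div 2" using nh by simp
  have split: "{..<n} = insert 0 (insert (h + 1) ({1..h} \<union> {n-h..n-1}))" using nh by auto
  have "complex_of_real (nu n u) = (\<Prod>k<n. lam n u k)" by (rule det_circ[OF n0])
  also have "\<dots> = lam n u 0 * (lam n u (h + 1) * ((\<Prod>k\<in>{1..h}. lam n u k) * (\<Prod>k\<in>{n-h..n-1}. lam n u k)))"
    unfolding split using nh by (subst prod.insert, simp, simp, subst prod.insert) (auto simp: prod.union_disjoint)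
  also have "\<dots> = complex_of_real (vplus n u * vminus n u * (\<Prod>k\<in>{1..h}. (vk n k u)\<^sup>2 + (vtk n k u)\<^sup>2))"
    using prod_pairs[OF n0, of h u] nh lam_half[OF n(1) n0, of u] hh by (simp add: lam_zero mult_ac)
  finally show ?thesis unfolding h_def of_real_eq_iff .
qed


lemma cis_eq_imp: "cis a = cis b \<Longrightarrow> \<exists>m::int. a = b + 2 * pi * m"
proof -
  assume "cis a = cis b"
  then have "cos a = cos b" "sin a = sin b" by (metis cis.sel(1), metis cis.sel(2))
  then show ?thesis using sin_cos_eq_iff by blast
qed

lemma phik_cis: assumes r: "0 < rhok n k u"
  shows "cis (phik n k u) = lam n u k / complex_of_real (rhok n k u)"
proof -
  let ?c = "vk n k u / rhok n k u" and ?s = "vtk n k u / rhok n k u"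
  let ?P = "\<lambda>\<phi>. 0 \<le> \<phi> \<and> \<phi> < 2 * pi \<and> cos \<phi> = ?c \<and> sin \<phi> = ?s"
  have "(rhok n k u)\<^sup>2 = (vk n k u)\<^sup>2 + (vtk n k u)\<^sup>2"
    unfolding rhok_def by simp
  then have rr: "(vk n k u)\<^sup>2 + (vtk n k u)\<^sup>2 = (rhok n k u)\<^sup>2" by simp
  have "?c\<^sup>2 + ?s\<^sup>2 = ((vk n k u)\<^sup>2 + (vtk n k u)\<^sup>2) / (rhok n k u)\<^sup>2"
    by (simp add: power_divide add_divide_distrib)
  also have "\<dots> = 1" unfolding rr using r by simp
  finally have "?c\<^sup>2 + ?s\<^sup>2 = 1" .
  then obtain t where t: "?P t" using sincos_total_2pi by metis
  have uniq: "\<phi> = t" if "?P \<phi>" for \<phi>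
  proof -
    from that t have "sin \<phi> = sin t \<and> cos \<phi> = cos t" by simp
    then obtain m :: int where m: "\<phi> = t + 2 * pi * m" using sin_cos_eq_iff by blast
    have a: "0 \<le> t" "t < 2 * pi" "0 \<le> \<phi>" "\<phi> < 2 * pi" using that t by auto
    have p: "0 < 2 * pi" by simp
    have "2 * pi * real_of_int m < 2 * pi * 1" using a m by linarith
    then have "real_of_int m < 1" by (simp only: mult_less_cancel_left_pos[OF p])
    then have "m < 1" by simp
    moreover have "2 * pi * (-1) < 2 * pi * real_of_int m" using a m by linarith
    then have "-1 < real_of_int m" by (simp only: mult_less_cancel_left_pos[OF p])
    then have "-1 < m" by simp
    ultimately have "m = 0" by simp
    then show ?thesis using m by simp
  qed
  have "?P (phik n k u)" unfolding phik_def
    by (rule theI[of ?P t, OF t uniq])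
  then have "cis (phik n k u) = Complex ?c ?s" by (intro complex_eqI) simp_all
  also have "\<dots> = lam n u k / complex_of_real (rhok n k u)"
    by (intro complex_eqI) (simp_all add: lam_Complex Re_divide_of_real Im_divide_of_real)
  finally show ?thesis .
qed

theorem mainTheorem7:
  fixes n :: nat and u u1 u2 :: "nat \<Rightarrow> real"
  assumes "2 \<le> n"
  shows
    "complex_of_real (nu n u) =
       (\<Prod>k<n. \<Sum>p<n. cis (2 * pi * real k / real n) ^ p * complex_of_real (u p))
     \<and> (even n \<longrightarrow> nu n u = vplus n u * vminus n u *
          (\<Prod>k\<in>{1..n div 2 - 1}. (vk n k u)\<^sup>2 + (vtk n k u)\<^sup>2))
     \<and> (odd n \<longrightarrow> nu n u = vplus n u *
          (\<Prod>k\<in>{1..(n - 1) div 2}. (vk n k u)\<^sup>2 + (vtk n k u)\<^sup>2))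
     \<and> vplus n (pmul n u1 u2) = vplus n u1 * vplus n u2
     \<and> (even n \<longrightarrow> vminus n (pmul n u1 u2) = vminus n u1 * vminus n u2)
     \<and> (\<forall>k. 1 \<le> k \<and> k \<le> (n - 1) div 2 \<longrightarrow>
          vk n k (pmul n u1 u2) = vk n k u1 * vk n k u2 - vtk n k u1 * vtk n k u2
        \<and> vtk n k (pmul n u1 u2) = vk n k u1 * vtk n k u2 + vtk n k u1 * vk n k u2
        \<and> rhok n k (pmul n u1 u2) = rhok n k u1 * rhok n k u2
        \<and> (0 < rhok n k u1 \<and> 0 < rhok n k u2 \<longrightarrow>
             (\<exists>m::int. phik n k (pmul n u1 u2) = phik n k u1 + phik n k u2 + 2 * pi * m)))
     \<and> nu n (pmul n u1 u2) = nu n u1 * nu n u2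
     \<and> (0 < nu n u1 \<and> 0 < nu n u2 \<longrightarrow>
          amplitude n (pmul n u1 u2) = amplitude n u1 * amplitude n u2)
     \<and> (3 \<le> n \<and> vplus n u1 \<noteq> 0 \<and> vplus n u2 \<noteq> 0 \<longrightarrow>
          tan_theta_plus n (pmul n u1 u2) = tan_theta_plus n u1 * tan_theta_plus n u2 / sqrt 2)
     \<and> (3 \<le> n \<and> even n \<and> vminus n u1 \<noteq> 0 \<and> vminus n u2 \<noteq> 0 \<longrightarrow>
          tan_theta_minus n (pmul n u1 u2) = tan_theta_minus n u1 * tan_theta_minus n u2 / sqrt 2)
     \<and> (\<forall>k. 2 \<le> k \<and> k \<le> (n - 1) div 2 \<and> 0 < rhok n k u1 \<and> 0 < rhok n k u2 \<longrightarrow>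
          tan_psi n k (pmul n u1 u2) = tan_psi n k u1 * tan_psi n k u2)"
proof -
  have n0: "n > 0" using assms by simp
  let ?w = "pmul n u1 u2"
  have c1: "complex_of_real (nu n u) =
       (\<Prod>k<n. \<Sum>p<n. cis (2 * pi * real k / real n) ^ p * complex_of_real (u p))"
    using det_circ[OF n0, of u] by (simp add: lam_def)
  have vkm: "vk n k ?w = vk n k u1 * vk n k u2 - vtk n k u1 * vtk n k u2" for k
    using lam_mult[OF n0, of u1 u2 k] by (simp add: lam_Complex complex_eq_iff)
  have vtkm: "vtk n k ?w = vk n k u1 * vtk n k u2 + vtk n k u1 * vk n k u2" for k
    using lam_mult[OF n0, of u1 u2 k] by (simp add: lam_Complex complex_eq_iff)
  have rhom: "rhok n k ?w = rhok n k u1 * rhok n k u2" for k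
    using lam_mult[OF n0, of u1 u2 k] by (simp add: rhok_cmod norm_mult)
  have vpm: "vplus n ?w = vplus n u1 * vplus n u2"
    using lam_mult[OF n0, of u1 u2 0] by (metis lam_zero of_real_eq_iff of_real_mult)
  have vmm: "even n \<Longrightarrow> vminus n ?w = vminus n u1 * vminus n u2"
    using lam_mult[OF n0, of u1 u2 "n div 2"] by (metis lam_half n0 of_real_eq_iff of_real_mult)
  have phim: "\<exists>m::int. phik n k ?w = phik n k u1 + phik n k u2 + 2 * pi * m"
    if r1: "0 < rhok n k u1" and r2: "0 < rhok n k u2" for k
  proof -
    have r: "0 < rhok n k ?w" using r1 r2 rhom by simp
    have "cis (phik n k ?w) = lam n u1 k * lam n u2 k / (complex_of_real (rhok n k u1) * complex_of_real (rhok n k u2))"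
      using phik_cis[OF r] by (simp add: rhom lam_mult[OF n0])
    also have "\<dots> = cis (phik n k u1) * cis (phik n k u2)"
      using phik_cis[OF r1] phik_cis[OF r2] by simp
    also have "\<dots> = cis (phik n k u1 + phik n k u2)" by (simp add: cis_mult)
    finally show ?thesis using cis_eq_imp by blast
  qed
  have num: "nu n ?w = nu n u1 * nu n u2"
  proof -
    have "complex_of_real (nu n ?w) = (\<Prod>k<n. lam n u1 k * lam n u2 k)"
      using det_circ[OF n0, of ?w] by (simp add: lam_mult[OF n0])
    also have "\<dots> = complex_of_real (nu n u1 * nu n u2)"
      by (simp add: prod.distrib det_circ[OF n0])
    finally show ?thesis by (simp only: of_real_eq_iff)
  qed
  have amp: "amplitude n ?w = amplitude n u1 * amplitude n u2"
    by (simp add: amplitude_def num real_root_mult)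
  have s2: "sqrt 2 * sqrt 2 = (2::real)" by simp
  have tp: "tan_theta_plus n ?w = tan_theta_plus n u1 * tan_theta_plus n u2 / sqrt 2"
    if "vplus n u1 \<noteq> 0" "vplus n u2 \<noteq> 0"
    using that unfolding tan_theta_plus_def rhom vpm by (simp add: field_simps)
  have tm: "tan_theta_minus n ?w = tan_theta_minus n u1 * tan_theta_minus n u2 / sqrt 2"
    if "even n" "vminus n u1 \<noteq> 0" "vminus n u2 \<noteq> 0"
    using that unfolding tan_theta_minus_def rhom vmm[OF that(1)] by (simp add: field_simps)
  have tps: "tan_psi n k ?w = tan_psi n k u1 * tan_psi n k u2" for k
    unfolding tan_psi_def rhom by simp
  show ?thesis
  proof (intro conjI impI allI)
  qed (simp_all add: c1 nu_even[OF _ assms] nu_odd[OF _ assms] vpm vmm vkm vtkm rhom phim num amp tp tm tps)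
qed

end
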